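(* For every integer $n\ge 9$, the number of partitions of $n$ into odd parts each at least $5$ equals the number of partitions of $n$ in which the part $1$ occurs at most twice (zero, one, or two times), the parts larger than $1$ are pairwise distinct, there are at least three parts that are $\ge 2$, and the three largest parts are consecutive integers. *)

theory Defs
  imports Main "HOL-Library.Multiset"
begin

definition is_partition :: "nat multiset \<Rightarrow> nat \<Rightarrow> bool" where
  "is_partition M n \<longleftrightarrow> (\<forall>x\<in>#M. 0 < x) \<and> sum_mset M = n"

definition parts_desc :: "nat multiset \<Rightarrow> nat list" where
  "parts_desc M = rev (sorted_list_of_multiset M)"

definition odd_ge5_partitions :: "nat \<Rightarrow> nat multiset set" where
  "odd_ge5_partitions n = {M. is_partition M n \<and> (\<forall>x\<in>#M. odd x \<and> 5 \<le> x)}"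

definition special_partitions :: "nat \<Rightarrow> nat multiset set" where
  "special_partitions n = {M. is_partition M n
      \<and> count M 1 \<le> 2
      \<and> (\<forall>x. 1 < x \<longrightarrow> count M x \<le> 1)
      \<and> 3 \<le> size (filter_mset (\<lambda>x. 2 \<le> x) M)
      \<and> parts_desc M ! 0 = parts_desc M ! 1 + 1
      \<and> parts_desc M ! 1 = parts_desc M ! 2 + 1}"

end

theory Submission
  imports Defs
begin


fun bits :: "nat \<Rightarrow> nat set" where
  "bits c = (if c = 0 then {} else (if odd c then {0} else {}) \<union> Suc ` bits (c div 2))"
declare bits.simps[simp del]

lemma finite_bits: "finite (bits c)"
  by (induction c rule: bits.induct) (subst bits.simps, auto)

lemma sum_bits: "(\<Sum>i\<in>bits c. (2::nat)^i) = c"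
proof (induction c rule: bits.induct)
  case (1 c)
  show ?case
  proof (cases "c = 0")
    case True then show ?thesis by (simp add: bits.simps)
  next
    case False
    have fin: "finite (Suc ` bits (c div 2))" using finite_bits by simp
    have s: "(\<Sum>i\<in>Suc ` bits (c div 2). (2::nat)^i) = 2 * (c div 2)"
      using 1[OF False] by (simp add: sum.reindex sum_distrib_left[symmetric])
    show ?thesis
    proof (cases "odd c")
      case True
      have "bits c = insert 0 (Suc ` bits (c div 2))" using False True by (subst bits.simps) auto
      then have "(\<Sum>i\<in>bits c. (2::nat)^i) = 1 + 2 * (c div 2)" using s fin by auto
      then show ?thesis using True by presburger
    next
      case F: False
      have "bits c = Suc ` bits (c div 2)" using False F by (subst bits.simps) auto
      then show ?thesis using s F by auto
    qed
  qed
qed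

lemma sum_pow2_split:
  assumes "finite I"
  shows "(\<Sum>i\<in>I. (2::nat)^i) = (if 0 \<in> I then 1 else 0) + 2 * (\<Sum>i\<in>{i. Suc i \<in> I}. 2^i)"
proof -
  have fin: "finite {i. Suc i \<in> I}" using assms
    by (metis finite_vimageI inj_Suc vimage_def)
  have eq: "I - {0} = Suc ` {i. Suc i \<in> I}"
    by (auto simp: image_iff) (metis not0_implies_Suc)+
  have "(\<Sum>i\<in>I. (2::nat)^i) = (\<Sum>i\<in>I \<inter> {0}. 2^i) + (\<Sum>i\<in>I - {0}. 2^i)"
    using assms by (metis sum.Int_Diff)
  also have "(\<Sum>i\<in>I - {0}. (2::nat)^i) = 2 * (\<Sum>i\<in>{i. Suc i \<in> I}. 2^i)"
    unfolding eq by (simp add: sum.reindex sum_distrib_left)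
  also have "(\<Sum>i\<in>I \<inter> {0}. (2::nat)^i) = (if 0 \<in> I then 1 else 0)" by auto
  finally show ?thesis .
qed

lemma bits_sum: "finite I \<Longrightarrow> bits (\<Sum>i\<in>I. (2::nat)^i) = I"
proof (induction "\<Sum>i\<in>I. (2::nat)^i" arbitrary: I rule: less_induct)
  case less
  define s where "s = (\<Sum>i\<in>I. (2::nat)^i)"
  define J where "J = {i. Suc i \<in> I}"
  have finJ: "finite J" unfolding J_def using less.prems
    by (metis finite_vimageI inj_Suc vimage_def)
  have sp: "s = (if 0 \<in> I then 1 else 0) + 2 * (\<Sum>i\<in>J. 2^i)"
    unfolding s_def J_def using sum_pow2_split[OF less.prems] .
  show ?case
  proof (cases "s = 0")
    case True
    then have "I = {}" unfolding s_def using less.prems by simp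
    then show ?thesis by (simp add: bits.simps)
  next
    case False
    have d: "s div 2 = (\<Sum>i\<in>J. 2^i)" using sp by auto
    have lt: "(\<Sum>i\<in>J. (2::nat)^i) < s" using False d by auto
    have IH: "bits (\<Sum>i\<in>J. (2::nat)^i) = J" using less.hyps[OF lt[unfolded s_def] finJ] .
    have o: "odd s \<longleftrightarrow> 0 \<in> I" using sp by auto
    have "bits s = (if odd s then {0} else {}) \<union> Suc ` J"
      using False d IH by (subst bits.simps) auto
    also have "\<dots> = I" using o unfolding J_def
      by (auto simp: image_iff) (metis not0_implies_Suc)+
    finally show ?thesis unfolding s_def .
  qed
qed



fun v2 :: "nat \<Rightarrow> nat" where
  "v2 d = (if d = 0 \<or> odd d then 0 else Suc (v2 (d div 2)))"
declare v2.simps[simp del]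

lemma v2_base: "d = 0 \<or> odd d \<Longrightarrow> v2 d = 0" by (subst v2.simps) simp

lemma bits0: "bits 0 = {}" by (subst bits.simps) simp

definition oddp :: "nat \<Rightarrow> nat" where "oddp d = d div 2 ^ v2 d"

lemma v2_decomp: "d = 2 ^ v2 d * oddp d \<and> (d > 0 \<longrightarrow> odd (oddp d))"
proof (induction d rule: v2.induct)
  case (1 d)
  show ?case
  proof (cases "d = 0 \<or> odd d")
    case True then show ?thesis by (auto simp: oddp_def v2_base)
  next
    case False
    then have v: "v2 d = Suc (v2 (d div 2))" by (subst v2.simps) auto
    have h: "d div 2 = 2 ^ v2 (d div 2) * oddp (d div 2)" "d div 2 > 0 \<longrightarrow> odd (oddp (d div 2))"
      using 1 False by auto
    have o: "oddp d = oddp (d div 2)" unfolding oddp_def v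
      by (simp add: div_mult2_eq)
    show ?thesis using h False unfolding o v by auto
  qed
qed

lemma decomp: "2 ^ v2 d * oddp d = d" using v2_decomp by metis
lemma oddp_odd: "d > 0 \<Longrightarrow> odd (oddp d)" using v2_decomp by metis

lemma v2_oddp_pow: "odd (m::nat) \<Longrightarrow> v2 (m * 2^i) = i \<and> oddp (m * 2^i) = m"
proof (induction i)
  case 0
  have a: "v2 m = 0" using 0 v2_base by blast
  have b: "oddp m = m" unfolding oddp_def a by simp
  show ?case using a b by simp
next
  case (Suc i)
  have ne: "\<not> (m * 2 ^ Suc i = 0 \<or> odd (m * 2 ^ Suc i))" using Suc.prems odd_pos by fastforce
  have dv: "m * 2 ^ Suc i div 2 = m * 2 ^ i" by simp
  have v: "v2 (m * 2 ^ Suc i) = Suc i" using Suc ne by (subst v2.simps) (simp only: dv if_False, simp)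
  show ?case using v by (simp add: oddp_def)
qed

lemma pow_inj:
  fixes m m' :: nat
  assumes "odd m" "odd m'" "m * 2^i = m' * 2^j" shows "m = m' \<and> i = j"
  using v2_oddp_pow[OF assms(1), of i] v2_oddp_pow[OF assms(2), of j] assms(3) by metis

definition OddP :: "nat \<Rightarrow> nat multiset set" where
  "OddP n = {M. is_partition M n \<and> (\<forall>x\<in>#M. odd x)}"
definition DP :: "nat \<Rightarrow> nat set set" where
  "DP n = {A. finite A \<and> 0 \<notin> A \<and> \<Sum>A = n}"

definition gl :: "nat set \<Rightarrow> nat multiset" where
  "gl A = (\<Sum>d\<in>A. replicate_mset (2 ^ v2 d) (oddp d))"
definition fl :: "nat multiset \<Rightarrow> nat set" where
  "fl M = (\<Union>m\<in>set_mset M. (\<lambda>i. m * 2^i) ` bits (count M m))"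

lemma finite_DP: "finite (DP n)"
proof -
  have "DP n \<subseteq> Pow {0..n}"
    unfolding DP_def by (auto intro: member_le_sum)
  then show ?thesis by (rule finite_subset) simp
qed

lemma sum_mset_gl: "finite A \<Longrightarrow> sum_mset (gl A) = \<Sum>A"
  unfolding gl_def by (induction A rule: finite_induct) (auto simp: decomp)

lemma count_gl:
  assumes "finite A" "0 \<notin> A"
  shows "count (gl A) m = (if odd m then (\<Sum>i\<in>{i. m * 2^i \<in> A}. 2^i) else 0)"
proof -
  have c: "count (gl A) m = (\<Sum>d\<in>A. if oddp d = m then 2 ^ v2 d else 0)"
    unfolding gl_def by (simp add: count_sum eq_commute)
  also have "\<dots> = (\<Sum>d\<in>{d\<in>A. oddp d = m}. 2 ^ v2 d)"
    using assms(1) by (simp add: sum.inter_filter)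
  finally have c: "count (gl A) m = (\<Sum>d\<in>{d\<in>A. oddp d = m}. 2 ^ v2 d)" .
  show ?thesis
  proof (cases "odd m")
    case True
    have bij: "bij_betw (\<lambda>i. m * 2^i) {i. m * 2^i \<in> A} {d\<in>A. oddp d = m}"
    proof (rule bij_betw_byWitness[where f'=v2])
      show "\<forall>a\<in>{i. m * 2 ^ i \<in> A}. v2 (m * 2 ^ a) = a" using v2_oddp_pow[OF True] by blast
      show "\<forall>a'\<in>{d \<in> A. oddp d = m}. m * 2 ^ v2 a' = a'" using decomp by (auto simp: mult.commute)
      show "(\<lambda>i. m * 2 ^ i) ` {i. m * 2 ^ i \<in> A} \<subseteq> {d \<in> A. oddp d = m}"
        using v2_oddp_pow[OF True] by auto
      show "v2 ` {d \<in> A. oddp d = m} \<subseteq> {i. m * 2 ^ i \<in> A}"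
        using decomp by (auto simp: mult.commute)
    qed
    have "(\<Sum>d\<in>{d\<in>A. oddp d = m}. (2::nat) ^ v2 d) = (\<Sum>i\<in>{i. m * 2^i \<in> A}. 2 ^ v2 (m * 2^i))"
      using sum.reindex_bij_betw[OF bij, of "\<lambda>d. (2::nat) ^ v2 d"] by simp
    also have "\<dots> = (\<Sum>i\<in>{i. m * 2^i \<in> A}. 2 ^ i)"
      using v2_oddp_pow[OF True] by simp
    finally show ?thesis using c True by simp
  next
    case False
    have e: "{d\<in>A. oddp d = m} = {}" using False oddp_odd assms(2)
      by (auto, metis gr0I)
    show ?thesis unfolding c e using False by simp
  qed
qed

lemma finite_pow_pre: "finite A \<Longrightarrow> odd (m::nat) \<Longrightarrow> finite {i. m * 2^i \<in> A}"
proof -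
  assume "finite A" "odd m"
  have "inj (\<lambda>i::nat. m * 2^i)"
    by (rule injI) (use pow_inj[OF \<open>odd m\<close> \<open>odd m\<close>] in blast)
  then show ?thesis using \<open>finite A\<close> by (metis finite_vimageI vimage_def)
qed

lemma gl_in: assumes "A \<in> DP n" shows "gl A \<in> OddP n"
proof -
  have A: "finite A" "0 \<notin> A" "\<Sum>A = n" using assms by (auto simp: DP_def)
  have od: "\<forall>x\<in>#gl A. odd x"
  proof
    fix x assume "x \<in># gl A"
    then have "count (gl A) x > 0" by simp
    then show "odd x" using count_gl[OF A(1,2)] by (auto split: if_splits)
  qed
  then show ?thesis using A sum_mset_gl[OF A(1)]
    by (auto simp: OddP_def is_partition_def intro: odd_pos)
qed

lemma fl_gl: assumes "A \<in> DP n" shows "fl (gl A) = A"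
proof -
  have A: "finite A" "0 \<notin> A" using assms by (auto simp: DP_def)
  have bc: "odd m \<Longrightarrow> bits (count (gl A) m) = {i. m * 2^i \<in> A}" for m
    using count_gl[OF A] bits_sum[OF finite_pow_pre[OF A(1)]] by simp
  show ?thesis
  proof (rule set_eqI, rule iffI)
    fix x assume "x \<in> fl (gl A)"
    then obtain m i where m: "m \<in># gl A" "i \<in> bits (count (gl A) m)" "x = m * 2^i"
      unfolding fl_def by auto
    have "odd m"
    proof (rule ccontr)
      assume "\<not> odd m" then have "count (gl A) m = 0" using count_gl[OF A, of m] by simp
      with m(1) show False by (metis count_eq_zero_iff)
    qed
    then show "x \<in> A" using m bc by auto
  next
    fix x assume x: "x \<in> A"
    then have xp: "x > 0" using A(2) by (auto intro: gr0I)
    let ?m = "oddp x"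
    have om: "odd ?m" using oddp_odd[OF xp] .
    have xe: "x = ?m * 2 ^ v2 x" using decomp[of x] by (simp add: mult.commute)
    have vi: "v2 x \<in> {i. ?m * 2^i \<in> A}" using x xe by simp
    have "count (gl A) ?m > 0"
    proof -
      have "count (gl A) ?m = (\<Sum>i\<in>{i. ?m * 2^i \<in> A}. 2^i)" using count_gl[OF A] om by simp
      also have "\<dots> \<ge> 2 ^ v2 x" using vi finite_pow_pre[OF A(1) om]
        by (metis (no_types, lifting) member_le_sum zero_le)
      finally show ?thesis using zero_less_power[of "2::nat" "v2 x"] by linarith
    qed
    then have "?m \<in># gl A" by simp
    moreover have "v2 x \<in> bits (count (gl A) ?m)" using bc[OF om] vi by simp
    ultimately show "x \<in> fl (gl A)" unfolding fl_def using xe by blast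
  qed
qed

lemma fl_props: assumes "M \<in> OddP n"
  shows "finite (fl M)" "0 \<notin> fl M" "gl (fl M) = M"
proof -
  have M: "\<forall>x\<in>#M. odd x" using assms by (auto simp: OddP_def)
  show fin: "finite (fl M)" unfolding fl_def using finite_bits by auto
  show z: "0 \<notin> fl M" unfolding fl_def using M by auto
  show "gl (fl M) = M"
  proof (rule multiset_eqI)
    fix m
    show "count (gl (fl M)) m = count M m"
    proof (cases "odd m")
      case True
      have "{i. m * 2^i \<in> fl M} = bits (count M m)"
      proof (rule set_eqI, rule iffI)
        fix i assume "i \<in> {i. m * 2^i \<in> fl M}"
        then obtain m' j where "m' \<in># M" "j \<in> bits (count M m')" "m * 2^i = m' * 2^j"
          unfolding fl_def by auto
        then show "i \<in> bits (count M m)" using pow_inj[OF True, of m' i j] M by auto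
      next
        fix i assume i: "i \<in> bits (count M m)"
        then have "count M m \<noteq> 0" using bits0 by (metis empty_iff)
        then have "m \<in># M" by (simp add: count_eq_zero_iff)
        then show "i \<in> {i. m * 2^i \<in> fl M}" using i unfolding fl_def by auto
      qed
      then show ?thesis using count_gl[OF fin z] True sum_bits by simp
    next
      case False
      then have "count M m = 0" using M by (auto simp: count_eq_zero_iff)
      then show ?thesis using count_gl[OF fin z] False by simp
    qed
  qed
qed

lemma euler: "card (OddP n) = card (DP n)"
proof -
  have "bij_betw gl (DP n) (OddP n)"
  proof (rule bij_betw_byWitness[where f'=fl])
    show "\<forall>a\<in>DP n. fl (gl a) = a" using fl_gl by blast
    show "\<forall>a'\<in>OddP n. gl (fl a') = a'" using fl_props by blast
    show "gl ` DP n \<subseteq> OddP n" using gl_in by blast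
    show "fl ` OddP n \<subseteq> DP n"
    proof
      fix A assume "A \<in> fl ` OddP n"
      then obtain M where M: "M \<in> OddP n" "A = fl M" by auto
      have "\<Sum>A = sum_mset (gl A)" using sum_mset_gl fl_props(1)[OF M(1)] M(2) by simp
      also have "\<dots> = n" using fl_props(3)[OF M(1)] M by (simp add: OddP_def is_partition_def)
      finally show "A \<in> DP n" using fl_props[OF M(1)] M(2) by (simp add: DP_def)
    qed
  qed
  then show ?thesis by (metis bij_betw_same_card)
qed

lemma finite_OddP: "finite (OddP n)"
proof -
  have "OddP n = gl ` DP n"
  proof
    show "gl ` DP n \<subseteq> OddP n" using gl_in by blast
    show "OddP n \<subseteq> gl ` DP n"
    proof
      fix M assume M: "M \<in> OddP n"
      have "\<Sum>(fl M) = sum_mset (gl (fl M))" using sum_mset_gl fl_props(1)[OF M] by simp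
      also have "\<dots> = n" using fl_props(3)[OF M] M by (simp add: OddP_def is_partition_def)
      finally have "fl M \<in> DP n" using fl_props[OF M] by (simp add: DP_def)
      then show "M \<in> gl ` DP n" using fl_props(3)[OF M] by (metis image_eqI)
    qed
  qed
  then show ?thesis using finite_DP by simp
qed



definition H :: "nat \<Rightarrow> nat multiset set" where
  "H n = {M \<in> OddP n. 1 \<notin># M}"

lemma finite_H: "finite (H n)" unfolding H_def using finite_OddP by simp

lemma addm_inj: "inj_on (add_mset x) S" by (auto intro: inj_onI)

lemma card_OddP_step:
  assumes "1 \<le> n" shows "card (OddP n) = card (OddP (n-1)) + card (H n)"
proof -
  have eq: "{M \<in> OddP n. 1 \<in># M} = add_mset 1 ` OddP (n-1)"
  proof
    show "{M \<in> OddP n. 1 \<in># M} \<subseteq> add_mset 1 ` OddP (n-1)"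
    proof
      fix M assume M: "M \<in> {M \<in> OddP n. 1 \<in># M}"
      then obtain R where R: "M = add_mset 1 R" by (metis multi_member_split mem_Collect_eq)
      have "R \<in> OddP (n-1)" using M unfolding R by (auto simp: OddP_def is_partition_def)
      then show "M \<in> add_mset 1 ` OddP (n-1)" using R by blast
    qed
    show "add_mset 1 ` OddP (n-1) \<subseteq> {M \<in> OddP n. 1 \<in># M}"
      using assms by (auto simp: OddP_def is_partition_def)
  qed
  have "OddP n = {M \<in> OddP n. 1 \<in># M} \<union> H n" unfolding H_def by auto
  then have "card (OddP n) = card {M \<in> OddP n. 1 \<in># M} + card (H n)"
    using finite_OddP[of n] by (metis (no_types, lifting) H_def card_Un_disjoint
        disjoint_iff finite_Un mem_Collect_eq)
  also have "card {M \<in> OddP n. 1 \<in># M} = card (OddP (n-1))"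
    unfolding eq by (rule card_image[OF addm_inj])
  finally show ?thesis .
qed

lemma card_H_step:
  "card (H n) = (if 3 \<le> n then card (H (n-3)) else 0) + card (odd_ge5_partitions n)"
proof -
  have eq: "{M \<in> H n. 3 \<in># M} = (if 3 \<le> n then add_mset 3 ` H (n-3) else {})"
  proof (cases "3 \<le> n")
    case True
    have "{M \<in> H n. 3 \<in># M} = add_mset 3 ` H (n-3)"
    proof
      show "{M \<in> H n. 3 \<in># M} \<subseteq> add_mset 3 ` H (n-3)"
      proof
        fix M assume M: "M \<in> {M \<in> H n. 3 \<in># M}"
        then obtain R where R: "M = add_mset 3 R" by (metis multi_member_split mem_Collect_eq)
        have "R \<in> H (n-3)" using M unfolding R by (auto simp: H_def OddP_def is_partition_def)
        then show "M \<in> add_mset 3 ` H (n-3)" using R by blast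
      qed
      show "add_mset 3 ` H (n-3) \<subseteq> {M \<in> H n. 3 \<in># M}"
        using True by (auto simp: H_def OddP_def is_partition_def)
    qed
    then show ?thesis using True by simp
  next
    case False
    have "\<not> (M \<in> H n \<and> 3 \<in># M)" for M
    proof
      assume M: "M \<in> H n \<and> 3 \<in># M"
      then obtain R where R: "M = add_mset 3 R" by (metis multi_member_split)
      then have "3 \<le> sum_mset M" by simp
      then show False using M False by (auto simp: H_def OddP_def is_partition_def)
    qed
    then show ?thesis using False by auto
  qed
  have o5: "{M \<in> H n. 3 \<notin># M} = odd_ge5_partitions n"
  proof -
    have "x \<ge> 5" if "odd x" "x \<noteq> 1" "x \<noteq> 3" "x > 0" for x :: nat
    proof (rule ccontr)
      assume "\<not> x \<ge> 5"
      then have "x \<in> {1,2,3,4}" using that(4) by auto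
      then show False using that by auto
    qed
    then show ?thesis unfolding H_def OddP_def odd_ge5_partitions_def is_partition_def
      by (auto; fastforce)
  qed
  have "H n = {M \<in> H n. 3 \<in># M} \<union> {M \<in> H n. 3 \<notin># M}" by auto
  then have "card (H n) = card {M \<in> H n. 3 \<in># M} + card {M \<in> H n. 3 \<notin># M}"
    using finite_H[of n] by (metis (no_types, lifting) card_Un_disjoint
        disjoint_iff finite_Un mem_Collect_eq)
  also have "card {M \<in> H n. 3 \<in># M} = (if 3 \<le> n then card (H (n-3)) else 0)"
    unfolding eq using card_image[OF addm_inj, of 3 "H (n-3)"] by simp
  finally show ?thesis unfolding o5 .
qed



definition T2 :: "nat \<Rightarrow> nat set set" where
  "T2 n = {A \<in> DP n. A \<noteq> {} \<and> 2 \<le> Max A \<and> Max A - 1 \<in> A}"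
definition T3 :: "nat \<Rightarrow> nat set set" where
  "T3 n = {A \<in> DP n. A \<noteq> {} \<and> 3 \<le> Max A \<and> Max A - 1 \<in> A \<and> Max A - 2 \<in> A}"
definition Tp :: "nat \<Rightarrow> nat set set" where
  "Tp n = {A \<in> T3 n. 1 \<notin> A \<and> 4 \<le> Max A}"

lemma MaxI: "finite A \<Longrightarrow> m \<in> A \<Longrightarrow> (\<forall>x\<in>A. x \<le> m) \<Longrightarrow> Max A = m"
  by (simp add: Max_eqI)

lemma sum_insert_remove:
  fixes A :: "nat set"
  assumes "finite A" "a \<in> A" "b \<notin> A - {a}"
  shows "\<Sum>(insert b (A - {a})) + a = \<Sum>A + b"
proof -
  have "\<Sum>(insert b (A - {a})) = b + \<Sum>(A - {a})" using assms by simp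
  moreover have "\<Sum>A = a + \<Sum>(A - {a})" using assms by (simp add: sum.remove)
  ultimately show ?thesis by simp
qed

lemma Max1: assumes "finite A" "0 \<notin> A" "A \<noteq> {}" "Max A = (1::nat)" shows "A = {1}"
proof -
  have "\<forall>x\<in>A. x = 1"
  proof
    fix x assume x: "x \<in> A"
    then have "x \<le> 1" using Max_ge[OF assms(1) x] assms(4) by simp
    moreover have "x \<noteq> 0" using x assms by auto
    ultimately show "x = 1" by simp
  qed
  moreover have "1 \<in> A" using Max_in[OF assms(1,3)] assms(4) by simp
  ultimately show ?thesis by blast
qed

definition up :: "nat set \<Rightarrow> nat set" where
  "up B = (if B = {} then {1} else insert (Max B + 1) (B - {Max B}))"
definition down :: "nat set \<Rightarrow> nat set" where
  "down A = (if Max A \<ge> 2 then insert (Max A - 1) (A - {Max A}) else A - {Max A})"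

lemma card_DP_step:
  assumes "1 \<le> n" shows "card (DP n) = card (DP (n-1)) + card (T2 n)"
proof -
  have bij: "bij_betw up (DP (n-1)) (DP n - T2 n)"
  proof (rule bij_betw_byWitness[where f'=down])
    show "\<forall>B\<in>DP (n-1). down (up B) = B"
    proof
      fix B assume B: "B \<in> DP (n-1)"
      show "down (up B) = B"
      proof (cases "B = {}")
        case True then show ?thesis by (simp add: up_def down_def)
      next
        case False
        let ?m = "Max B"
        have fin: "finite B" using B by (simp add: DP_def)
        have mB: "?m \<in> B" "\<forall>x\<in>B. x \<le> ?m" using False fin by auto
        have "Max (up B) = ?m + 1"
          unfolding up_def using False fin mB by (intro MaxI) (auto intro: le_SucI dest: Max_ge[OF fin])
        moreover have "?m \<ge> 1"
        proof -
          have "0 \<notin> B" using B by (simp add: DP_def)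
          then show ?thesis using mB(1) by (cases "?m") auto
        qed
        ultimately show ?thesis unfolding down_def up_def using False mB by auto
      qed
    qed
    show "\<forall>A\<in>DP n - T2 n. up (down A) = A"
    proof
      fix A assume A: "A \<in> DP n - T2 n"
      have fin: "finite A" and z: "0 \<notin> A" and s: "\<Sum>A = n" using A by (auto simp: DP_def)
      have ne: "A \<noteq> {}" using s assms by auto
      let ?m = "Max A"
      have mA: "?m \<in> A" "\<forall>x\<in>A. x \<le> ?m" using ne fin by auto
      have m1: "?m \<ge> 1" using mA z by (metis gr0I less_one linorder_not_less)
      show "up (down A) = A"
      proof (cases "?m \<ge> 2")
        case True
        have nt: "?m - 1 \<notin> A" using A True ne by (auto simp: T2_def)
        have dA: "down A = insert (?m - 1) (A - {?m})" using True by (simp add: down_def)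
        have "Max (down A) = ?m - 1" unfolding dA using fin mA by (intro MaxI) (auto intro: le_SucI dest: Max_ge[OF fin])
        then show ?thesis unfolding up_def dA using True mA nt by auto
      next
        case False
        then have "?m = 1" using m1 by simp
        then have "A = {1}" using Max1 fin z ne by blast
        then show ?thesis by (simp add: up_def down_def)
      qed
    qed
    show "up ` DP (n-1) \<subseteq> DP n - T2 n"
    proof
      fix A assume "A \<in> up ` DP (n-1)"
      then obtain B where B: "B \<in> DP (n-1)" "A = up B" by auto
      have fin: "finite B" and z: "0 \<notin> B" and s: "\<Sum>B = n - 1" using B by (auto simp: DP_def)
      show "A \<in> DP n - T2 n"
      proof (cases "B = {}")
        case True
        then have "n = 1" using s assms by simp
        then show ?thesis using B True by (auto simp: up_def DP_def T2_def)
      next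
        case False
        let ?m = "Max B"
        have mB: "?m \<in> B" "\<forall>x\<in>B. x \<le> ?m" using False fin by auto
        have A': "A = insert (?m + 1) (B - {?m})" using B False by (simp add: up_def)
        have MA: "Max A = ?m + 1" unfolding A' using fin mB by (intro MaxI) (auto intro: le_SucI dest: Max_ge[OF fin])
        have sum: "\<Sum>A + ?m = \<Sum>B + (?m + 1)" unfolding A'
          by (rule sum_insert_remove) (use fin mB in \<open>auto dest: Max_ge[OF fin]\<close>)
        have "\<Sum>A = n" using sum s assms by simp
        moreover have "?m \<notin> A" unfolding A' by simp
        ultimately show ?thesis using fin z MA unfolding A' by (auto simp: DP_def T2_def)
      qed
    qed
    show "down ` (DP n - T2 n) \<subseteq> DP (n-1)"
    proof
      fix B assume "B \<in> down ` (DP n - T2 n)"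
      then obtain A where A: "A \<in> DP n - T2 n" "B = down A" by auto
      have fin: "finite A" and z: "0 \<notin> A" and s: "\<Sum>A = n" using A by (auto simp: DP_def)
      have ne: "A \<noteq> {}" using s assms by auto
      let ?m = "Max A"
      have mA: "?m \<in> A" "\<forall>x\<in>A. x \<le> ?m" using ne fin by auto
      have m1: "?m \<ge> 1" using mA z by (metis gr0I less_one linorder_not_less)
      show "B \<in> DP (n-1)"
      proof (cases "?m \<ge> 2")
        case True
        have nt: "?m - 1 \<notin> A" using A True ne by (auto simp: T2_def)
        have dA: "B = insert (?m - 1) (A - {?m})" using True A by (simp add: down_def)
        have "\<Sum>B + ?m = \<Sum>A + (?m - 1)" unfolding dA
          by (rule sum_insert_remove) (use fin mA nt in auto)
        then have "\<Sum>B = n - 1" using s m1 by simp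
        then show ?thesis using fin z True unfolding dA by (auto simp: DP_def)
      next
        case False
        then have "?m = 1" using m1 by simp
        then have "A = {1}" using Max1 fin z ne by blast
        then show ?thesis using A s by (simp add: down_def DP_def)
      qed
    qed
  qed
  have "card (DP n - T2 n) = card (DP (n-1))" using bij by (metis bij_betw_same_card)
  moreover have "card (DP n) = card (DP n - T2 n) + card (T2 n)"
  proof -
    have sub: "T2 n \<subseteq> DP n" unfolding T2_def by auto
    have "card (DP n - T2 n) = card (DP n) - card (T2 n)"
      using card_Diff_subset[OF finite_subset[OF sub finite_DP] sub] .
    moreover have "card (T2 n) \<le> card (DP n)" using card_mono[OF finite_DP sub] .
    ultimately show ?thesis by simp
  qed
  ultimately show ?thesis by simp
qed

lemma card_split: "finite S \<Longrightarrow> card S = card {x\<in>S. P x} + card {x\<in>S. \<not> P x}"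
proof -
  assume f: "finite S"
  have "S = {x\<in>S. P x} \<union> {x\<in>S. \<not> P x}" by blast
  moreover have "{x\<in>S. P x} \<inter> {x\<in>S. \<not> P x} = {}" by blast
  ultimately show ?thesis using f by (metis (no_types, lifting) card_Un_disjoint finite_Un)
qed

lemma finite_T2: "finite (T2 n)" unfolding T2_def using finite_DP by simp
lemma finite_T3: "finite (T3 n)" unfolding T3_def using finite_DP by simp
lemma finite_Tp: "finite (Tp n)" unfolding Tp_def using finite_T3 by simp

definition sh :: "nat set \<Rightarrow> nat set" where
  "sh A = insert (Max A - 2) (A - {Max A})"
definition un :: "nat set \<Rightarrow> nat set" where
  "un B = insert (Max B + 1) (B - {Max B - 1})"

lemma card_T2_step:
  assumes "2 \<le> n"
  shows "card (T2 n) = card (T2 (n-2)) + card (T3 n) + (if n = 3 then 1 else 0)"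
proof -
  let ?R = "{A\<in>T2 n. Max A \<ge> 3 \<and> Max A - 2 \<notin> A}"
  let ?E = "{A\<in>T2 n. Max A = 2}"
  have shA: "Max (sh A) = Max A - 1 \<and> sh A \<in> T2 (n-2) \<and> un (sh A) = A" if A: "A \<in> ?R" for A
  proof -
    have fin: "finite A" and ne: "A \<noteq> {}" and z: "0 \<notin> A" and s: "\<Sum>A = n"
      using A by (auto simp: T2_def DP_def)
    define m where "m = Max A"
    have mA: "m \<in> A" "\<And>x. x \<in> A \<Longrightarrow> x \<le> m" using ne fin unfolding m_def by auto
    have m3: "m \<ge> 3" "m - 1 \<in> A" "m - 2 \<notin> A" using A unfolding m_def by (auto simp: T2_def)
    have sA: "sh A = insert (m - 2) (A - {m})" by (simp add: sh_def m_def)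
    have Ms: "Max (sh A) = m - 1"
    proof (rule MaxI)
      show "finite (sh A)" unfolding sA using fin by simp
      have "m - 1 \<noteq> m" using m3(1) by linarith
      then show "m - 1 \<in> sh A" using m3(2) unfolding sA by simp
      show "\<forall>x\<in>sh A. x \<le> m - 1"
      proof
        fix x assume "x \<in> sh A"
        then have "x = m - 2 \<or> (x \<in> A \<and> x \<noteq> m)" using sA by auto
        then show "x \<le> m - 1" using mA(2)[of x] by auto
      qed
    qed
    have u: "un (sh A) = insert m (sh A - {m - 2})" unfolding un_def Ms using m3
      by (simp add: Suc_diff_Suc numeral_2_eq_2)
    have "un (sh A) = A"
    proof -
      have "sh A - {m - 2} = A - {m}" using sA m3 by auto
      then show ?thesis using u mA by auto
    qed
    moreover have "sh A \<in> T2 (n-2)"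
    proof -
      have "\<Sum>(sh A) + m = \<Sum>A + (m - 2)" unfolding sA
        by (rule sum_insert_remove) (use fin mA m3 in auto)
      then have "\<Sum>(sh A) = n - 2" using s m3 by simp
      moreover have "m - 2 \<in> sh A" "0 \<notin> sh A" "finite (sh A)" using sA m3 z fin by auto
      moreover have "Max (sh A) - 1 = m - 2" "Max (sh A) \<ge> 2" using Ms m3 by auto
      ultimately show ?thesis unfolding T2_def DP_def by auto
    qed
    ultimately show ?thesis using Ms m_def by simp
  qed
  have unB: "un B \<in> ?R \<and> sh (un B) = B" if B: "B \<in> T2 (n-2)" for B
  proof -
    have fin: "finite B" and ne: "B \<noteq> {}" and z: "0 \<notin> B" and s: "\<Sum>B = n - 2"
      using B by (auto simp: T2_def DP_def)
    define k where "k = Max B"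
    have kB: "k \<in> B" "\<And>x. x \<in> B \<Longrightarrow> x \<le> k" using ne fin unfolding k_def by auto
    have k2: "k \<ge> 2" "k - 1 \<in> B" using B unfolding k_def by (auto simp: T2_def)
    have uB: "un B = insert (k + 1) (B - {k - 1})" by (simp add: un_def k_def)
    have Mu: "Max (un B) = k + 1"
    proof (rule MaxI)
      show "finite (un B)" using fin uB by simp
      show "k + 1 \<in> un B" using uB by auto
      show "\<forall>x\<in>un B. x \<le> k + 1" using uB kB(2) by fastforce
    qed
    have "sh (un B) = insert (k - 1) (un B - {k + 1})" unfolding sh_def Mu by simp
    also have "\<dots> = B"
    proof -
      have nk: "k + 1 \<notin> B" using kB(2)[of "k+1"] by auto
      have "k - 1 \<noteq> k + 1" by simp
      then show ?thesis unfolding uB using k2(2) nk by auto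
    qed
    finally have "sh (un B) = B" .
    moreover have "un B \<in> ?R"
    proof -
      have "\<Sum>(un B) + (k - 1) = \<Sum>B + (k + 1)" unfolding uB
        by (rule sum_insert_remove) (use fin kB k2 in \<open>auto dest: kB(2)\<close>)
      then have "\<Sum>(un B) = n" using s k2 assms by simp
      moreover have "k \<in> un B" "k - 1 \<notin> un B" "0 \<notin> un B" "finite (un B)" "un B \<noteq> {}"
        using uB kB k2 z fin by auto
      moreover have "Max (un B) - 1 = k" "Max (un B) - 2 = k - 1" "Max (un B) \<ge> 3" using Mu k2 by auto
      ultimately show ?thesis unfolding T2_def DP_def by auto
    qed
    ultimately show ?thesis by simp
  qed
  have bij: "bij_betw sh ?R (T2 (n-2))"
    by (rule bij_betw_byWitness[where f'=un]) (use shA unB in blast)+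
  have E: "?E = (if n = 3 then {{1,2}} else {})"
  proof -
    have fwd: "A = {1,2} \<and> n = 3" if A: "A \<in> ?E" for A
    proof -
      have fin: "finite A" and ne: "A \<noteq> {}" and z: "0 \<notin> A" and s: "\<Sum>A = n"
        using A by (auto simp: T2_def DP_def)
      have m: "Max A = 2" "1 \<in> A" using A by (auto simp: T2_def)
      have "2 \<in> A" using Max_in[OF fin ne] m by simp
      moreover have "x \<in> {1,2}" if "x \<in> A" for x
      proof -
        have "x \<le> 2" using Max_ge[OF fin that] m by simp
        moreover have "x \<noteq> 0" using that z by (metis)
        ultimately show ?thesis by auto
      qed
      ultimately have "A = {1,2}" using m by blast
      then show ?thesis using s by simp
    qed
    have bwd: "{1,2} \<in> ?E" if "n = 3"
    proof -
      have "Max {1,2::nat} = 2" by (simp add: max_def)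
      then show ?thesis using that by (simp add: T2_def DP_def)
    qed
    show ?thesis
    proof (cases "n = 3")
      case True
      have "?E \<subseteq> {{1,2}}" using fwd by blast
      moreover have "{{1,2}} \<subseteq> ?E" using bwd[OF True] by blast
      ultimately have "?E = {{1,2}}" by (rule equalityI)
      then show ?thesis unfolding if_P[OF True] .
    next
      case False
      then have "?E = {}" using fwd by blast
      then show ?thesis using False by simp
    qed
  qed
  have "card (T2 n) = card {A\<in>T2 n. Max A \<ge> 3 \<and> Max A - 2 \<in> A} + card {A\<in>T2 n. \<not> (Max A \<ge> 3 \<and> Max A - 2 \<in> A)}"
    by (rule card_split[OF finite_T2])
  also have "{A\<in>T2 n. Max A \<ge> 3 \<and> Max A - 2 \<in> A} = T3 n"
    unfolding T2_def T3_def by auto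
  also have "card {A\<in>T2 n. \<not> (Max A \<ge> 3 \<and> Max A - 2 \<in> A)} = card ?R + card ?E"
  proof -
    have f: "finite {A\<in>T2 n. \<not> (Max A \<ge> 3 \<and> Max A - 2 \<in> A)}" using finite_T2 by simp
    have "card {A\<in>T2 n. \<not> (Max A \<ge> 3 \<and> Max A - 2 \<in> A)} =
      card {A\<in>{A\<in>T2 n. \<not> (Max A \<ge> 3 \<and> Max A - 2 \<in> A)}. Max A \<ge> 3} +
      card {A\<in>{A\<in>T2 n. \<not> (Max A \<ge> 3 \<and> Max A - 2 \<in> A)}. \<not> Max A \<ge> 3}"
      by (rule card_split[OF f])
    also have "{A\<in>{A\<in>T2 n. \<not> (Max A \<ge> 3 \<and> Max A - 2 \<in> A)}. Max A \<ge> 3} = ?R" by auto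
    also have "{A\<in>{A\<in>T2 n. \<not> (Max A \<ge> 3 \<and> Max A - 2 \<in> A)}. \<not> Max A \<ge> 3} = ?E"
      unfolding T2_def by auto
    finally show ?thesis .
  qed
  also have "card ?R = card (T2 (n-2))" using bij_betw_same_card[OF bij] .
  finally show ?thesis unfolding E by simp
qed



lemma card_T3_step:
  assumes "1 \<le> n"
  shows "card (T3 n) = card (Tp n) + card (Tp (n-1)) + (if n = 6 then 1 else 0)"
proof -
  let ?P = "{A\<in>T3 n. 1 \<in> A \<and> 4 \<le> Max A}"
  let ?E = "{A\<in>T3 n. \<not> 4 \<le> Max A}"
  have fw: "A - {1} \<in> Tp (n-1) \<and> insert 1 (A - {1}) = A" if A: "A \<in> ?P" for A
  proof -
    have fin: "finite A" and ne: "A \<noteq> {}" and z: "0 \<notin> A" and s: "\<Sum>A = n"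
      using A by (auto simp: T3_def DP_def)
    define m where "m = Max A"
    have mA: "m \<in> A" "\<And>x. x \<in> A \<Longrightarrow> x \<le> m" using ne fin unfolding m_def by auto
    have m4: "m \<ge> 4" "m - 1 \<in> A" "m - 2 \<in> A" "1 \<in> A" using A unfolding m_def by (auto simp: T3_def)
    have MB: "Max (A - {1}) = m"
    proof (rule MaxI)
      show "finite (A - {1})" using fin by simp
      show "m \<in> A - {1}" using mA m4 by simp
      show "\<forall>x\<in>A - {1}. x \<le> m" using mA(2) by blast
    qed
    have "\<Sum>(A - {1}) = n - 1" using s fin m4(4) by (simp add: sum_diff1_nat)
    moreover have "m - 1 \<in> A - {1}" "m - 2 \<in> A - {1}" "m \<in> A - {1}" using m4 mA by auto
    moreover have "1 \<notin> A - {1}" "0 \<notin> A - {1}" "finite (A - {1})" using z fin by auto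
    ultimately have "A - {1} \<in> Tp (n-1)" using MB m4(1)
      unfolding Tp_def T3_def DP_def by auto
    moreover have "insert 1 (A - {1}) = A" using m4(4) by auto
    ultimately show ?thesis by simp
  qed
  have bw: "insert 1 B \<in> ?P \<and> insert 1 B - {1} = B" if B: "B \<in> Tp (n-1)" for B
  proof -
    have fin: "finite B" and ne: "B \<noteq> {}" and z: "0 \<notin> B" and s: "\<Sum>B = n - 1"
      and n1: "1 \<notin> B" using B by (auto simp: Tp_def T3_def DP_def)
    define k where "k = Max B"
    have kB: "k \<in> B" "\<And>x. x \<in> B \<Longrightarrow> x \<le> k" using ne fin unfolding k_def by auto
    have k4: "k \<ge> 4" "k - 1 \<in> B" "k - 2 \<in> B" using B unfolding k_def by (auto simp: Tp_def T3_def)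
    have MA: "Max (insert 1 B) = k"
    proof (rule MaxI)
      show "finite (insert 1 B)" using fin by simp
      show "k \<in> insert 1 B" using kB by simp
      show "\<forall>x\<in>insert 1 B. x \<le> k" using kB(2) k4(1) by auto
    qed
    have "\<Sum>(insert 1 B) = n" using s fin n1 assms by simp
    moreover have "k - 1 \<in> insert 1 B" "k - 2 \<in> insert 1 B" "1 \<in> insert 1 B"
      "0 \<notin> insert 1 B" "finite (insert 1 B)" using k4 z fin by auto
    ultimately have "insert 1 B \<in> ?P" using MA k4(1)
      unfolding T3_def DP_def by auto
    moreover have "insert 1 B - {1} = B" using n1 by auto
    ultimately show ?thesis by simp
  qed
  have bij: "bij_betw (\<lambda>A. A - {1}) ?P (Tp (n-1))"
    by (rule bij_betw_byWitness[where f'="insert 1"]) (use fw bw in blast)+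
  have E: "?E = (if n = 6 then {{1,2,3}} else {})"
  proof -
    have fwd: "A = {1,2,3} \<and> n = 6" if A: "A \<in> ?E" for A
    proof -
      have fin: "finite A" and ne: "A \<noteq> {}" and z: "0 \<notin> A" and s: "\<Sum>A = n"
        using A by (auto simp: T3_def DP_def)
      have M3: "Max A = 3" using A by (auto simp: T3_def)
      have "Max A - 1 \<in> A" "Max A - 2 \<in> A" using A by (auto simp: T3_def)
      then have m: "Max A = 3" "2 \<in> A" "1 \<in> A" using M3 by simp_all
      have "3 \<in> A" using Max_in[OF fin ne] m by simp
      moreover have "x \<in> {1,2,3}" if "x \<in> A" for x
      proof -
        have "x \<le> 3" using Max_ge[OF fin that] m by simp
        moreover have "x \<noteq> 0" using that z by metis
        ultimately show ?thesis by auto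
      qed
      ultimately have "A = {1,2,3}" using m by blast
      then show ?thesis using s by simp
    qed
    have bwd: "{1,2,3} \<in> ?E" if "n = 6"
    proof -
      have "Max {1,2,3::nat} = 3" by (simp add: max_def)
      then show ?thesis using that by (simp add: T3_def DP_def)
    qed
    show ?thesis
    proof (cases "n = 6")
      case True
      have "?E \<subseteq> {{1,2,3}}" using fwd by blast
      moreover have "{{1,2,3}} \<subseteq> ?E" using bwd[OF True] by blast
      ultimately have "?E = {{1,2,3}}" by (rule equalityI)
      then show ?thesis unfolding if_P[OF True] .
    next
      case False
      then have "?E = {}" using fwd by blast
      then show ?thesis using False by simp
    qed
  qed
  have "card (T3 n) = card {A\<in>T3 n. 1 \<notin> A \<and> 4 \<le> Max A} + card {A\<in>T3 n. \<not> (1 \<notin> A \<and> 4 \<le> Max A)}"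
    by (rule card_split[OF finite_T3])
  also have "{A\<in>T3 n. 1 \<notin> A \<and> 4 \<le> Max A} = Tp n" unfolding Tp_def ..
  also have "card {A\<in>T3 n. \<not> (1 \<notin> A \<and> 4 \<le> Max A)} = card ?P + card ?E"
  proof -
    have f: "finite {A\<in>T3 n. \<not> (1 \<notin> A \<and> 4 \<le> Max A)}" using finite_T3 by simp
    have "card {A\<in>T3 n. \<not> (1 \<notin> A \<and> 4 \<le> Max A)} =
      card {A\<in>{A\<in>T3 n. \<not> (1 \<notin> A \<and> 4 \<le> Max A)}. 4 \<le> Max A} +
      card {A\<in>{A\<in>T3 n. \<not> (1 \<notin> A \<and> 4 \<le> Max A)}. \<not> 4 \<le> Max A}"
      by (rule card_split[OF f])
    also have "{A\<in>{A\<in>T3 n. \<not> (1 \<notin> A \<and> 4 \<le> Max A)}. 4 \<le> Max A} = ?P" by blast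
    also have "{A\<in>{A\<in>T3 n. \<not> (1 \<notin> A \<and> 4 \<le> Max A)}. \<not> 4 \<le> Max A} = ?E" by blast
    finally show ?thesis .
  qed
  also have "card ?P = card (Tp (n-1))" using bij_betw_same_card[OF bij] .
  finally show ?thesis unfolding E by simp
qed



lemma pd_add: "(\<forall>y\<in>#M. y \<le> x) \<Longrightarrow> parts_desc (add_mset x M) = x # parts_desc M"
  unfolding parts_desc_def
  by (simp add: sorted_insort_is_snoc)

lemma sum_mset_mset_set: "finite A \<Longrightarrow> sum_mset (mset_set A) = \<Sum>(A::nat set)"
  using sum_unfold_sum_mset[of "\<lambda>x. x" A] by simp

lemma top_parts:
  assumes "size M \<ge> 3"
  obtains x y z where "parts_desc M ! 0 = x" "parts_desc M ! 1 = y" "parts_desc M ! 2 = z"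
    "x \<in># M" "y \<in># M" "z \<in># M" "\<forall>w\<in>#M. w \<le> x"
proof -
  have ne: "M \<noteq> {#}" using assms by auto
  define x where "x = Max (set_mset M)"
  have xM: "x \<in># M" "\<forall>w\<in>#M. w \<le> x" unfolding x_def using ne by auto
  define M1 where "M1 = M - {#x#}"
  have M: "M = add_mset x M1" unfolding M1_def using xM by simp
  have L: "parts_desc M = x # parts_desc M1"
    unfolding M using pd_add xM(2) M by (metis in_diffD M1_def)
  have s1: "size M1 \<ge> 2" using assms M by (metis Suc_le_mono numeral_3_eq_3 numeral_2_eq_2 size_add_mset)
  then have ne1: "M1 \<noteq> {#}" by auto
  define y where "y = Max (set_mset M1)"
  have yM: "y \<in># M1" "\<forall>w\<in>#M1. w \<le> y" unfolding y_def using ne1 by auto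
  define M2 where "M2 = M1 - {#y#}"
  have M1e: "M1 = add_mset y M2" unfolding M2_def using yM by simp
  have L1: "parts_desc M1 = y # parts_desc M2"
    unfolding M1e using pd_add yM(2) M1e by (metis in_diffD M2_def)
  have s2: "size M2 \<ge> 1" using s1 M1e by (metis Suc_le_mono numeral_2_eq_2 One_nat_def size_add_mset)
  then have ne2: "M2 \<noteq> {#}" by auto
  define z where "z = Max (set_mset M2)"
  have zM: "z \<in># M2" "\<forall>w\<in>#M2. w \<le> z" unfolding z_def using ne2 by auto
  define M3 where "M3 = M2 - {#z#}"
  have M2e: "M2 = add_mset z M3" unfolding M3_def using zM by simp
  have L2: "parts_desc M2 = z # parts_desc M3"
    unfolding M2e using pd_add zM(2) M2e by (metis in_diffD M3_def)
  have "parts_desc M ! 0 = x" "parts_desc M ! 1 = y" "parts_desc M ! 2 = z"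
    using L L1 L2 by (simp_all add: numeral_2_eq_2)
  moreover have "y \<in># M" "z \<in># M" using yM zM M M1e M2e by auto
  ultimately show ?thesis using that xM by blast
qed

definition Phi :: "nat multiset \<Rightarrow> nat \<times> nat set" where
  "Phi M = (count M 1, set_mset M - {1})"
definition Psi :: "nat \<times> nat set \<Rightarrow> nat multiset" where
  "Psi p = mset_set (snd p) + replicate_mset (fst p) 1"

lemma special_fw:
  assumes M: "M \<in> special_partitions n"
  shows "Phi M \<in> Sigma {0,1,2} (\<lambda>c. Tp (n - c)) \<and> Psi (Phi M) = M"
proof -
  define c where "c = count M 1"
  define A where "A = set_mset M - {1}"
  have pos: "\<forall>x\<in>#M. 0 < x" and sM: "sum_mset M = n" and c2: "c \<le> 2"
    and d: "\<And>x. 1 < x \<Longrightarrow> count M x \<le> 1"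
    and sz: "3 \<le> size (filter_mset (\<lambda>x. 2 \<le> x) M)"
    and t1: "parts_desc M ! 0 = parts_desc M ! 1 + 1"
    and t2: "parts_desc M ! 1 = parts_desc M ! 2 + 1"
    using M unfolding special_partitions_def is_partition_def c_def by auto
  have finA: "finite A" unfolding A_def by simp
  have z: "0 \<notin> A" unfolding A_def using pos by auto
  have n1: "1 \<notin> A" unfolding A_def by simp
  have Meq: "Psi (c, A) = M"
  proof (rule multiset_eqI)
    fix x
    show "count (Psi (c, A)) x = count M x"
    proof (cases "x = 1")
      case True then show ?thesis using n1 finA by (simp add: Psi_def c_def)
    next
      case False
      show ?thesis
      proof (cases "x \<in># M")
        case True
        then have "x > 1" using pos False by (metis less_one nat_neq_iff)
        then have "count M x = 1" using d[of x] True by (simp add: Suc_le_eq dual_order.antisym)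
        moreover have "x \<in> A" unfolding A_def using True False by simp
        ultimately show ?thesis using finA False by (simp add: Psi_def)
      next
        case F: False
        then have "x \<notin> A" unfolding A_def by simp
        then show ?thesis using finA False F by (simp add: Psi_def count_eq_zero_iff)
      qed
    qed
  qed
  have sA: "\<Sum>A = n - c"
  proof -
    have "sum_mset M = sum_mset (Psi (c, A))" using Meq by simp
    also have "\<dots> = sum_mset (mset_set A) + c" by (simp add: Psi_def)
    finally have "sum_mset M = sum_mset (mset_set A) + c" .
    then show ?thesis using sM sum_mset_mset_set[OF finA] by simp
  qed
  have sizeM: "size M \<ge> 3" using sz size_filter_mset_lesseq[of _ M] by (meson le_trans)
  obtain x y zz where xyz: "parts_desc M ! 0 = x" "parts_desc M ! 1 = y" "parts_desc M ! 2 = zz"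
    "x \<in># M" "y \<in># M" "zz \<in># M" "\<forall>w\<in>#M. w \<le> x"
    using top_parts[OF sizeM] by blast
  have rel: "x = zz + 2" "y = zz + 1" using xyz t1 t2 by auto
  have zz2: "zz \<ge> 2"
  proof (rule ccontr)
    assume "\<not> zz \<ge> 2"
    moreover have "zz > 0" using pos xyz(6) by blast
    ultimately have "zz = 1" by simp
    then have x3: "x = 3" using rel by simp
    let ?N = "filter_mset (\<lambda>x. 2 \<le> x) M"
    have "?N \<subseteq># mset_set {2,3}"
    proof (rule mset_subset_eqI)
      fix a
      show "count ?N a \<le> count (mset_set {2,3}) a"
      proof (cases "2 \<le> a \<and> a \<in># M")
        case True
        then have "a \<le> 3" using xyz(7) x3 by auto
        then have "a \<in> {2,3}" using True by auto
        then have e1: "count (mset_set {2,3::nat}) a = 1" by (elim insertE) auto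
        have e2: "count ?N a = count M a" using True by simp
        have "count M a \<le> 1" using d True by simp
        then show ?thesis using e1 e2 by simp
      next
        case False
        then have "count ?N a = 0" by (auto simp: not_in_iff)
        then show ?thesis by simp
      qed
    qed
    then have "size ?N \<le> size (mset_set {2,3::nat})" by (rule size_mset_mono)
    also have "\<dots> = 2" by simp
    finally show False using sz by simp
  qed
  have MA: "Max A = x"
  proof (rule MaxI[OF finA])
    show "x \<in> A" unfolding A_def using xyz(4) rel zz2 by simp
    show "\<forall>w\<in>A. w \<le> x" unfolding A_def using xyz(7) by auto
  qed
  have inA: "x - 1 \<in> A" "x - 2 \<in> A" "A \<noteq> {}"
    unfolding A_def using xyz(4,5,6) rel zz2 by auto
  have "A \<in> Tp (n - c)"
    unfolding Tp_def T3_def DP_def using finA z sA MA inA n1 rel zz2 by auto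
  moreover have "c \<in> {0,1,2}" using c2 by (auto simp: le_Suc_eq numeral_2_eq_2)
  moreover have "Phi M = (c, A)" unfolding Phi_def c_def A_def by simp
  ultimately show ?thesis using Meq by simp
qed

lemma special_bw:
  assumes "2 \<le> n" and p: "p \<in> Sigma {0,1,2} (\<lambda>c. Tp (n - c))"
  shows "Psi p \<in> special_partitions n \<and> Phi (Psi p) = p"
proof -
  obtain c A where pe: "p = (c, A)" by (cases p)
  have c2: "c \<le> 2" and A: "A \<in> Tp (n - c)" using p pe by auto
  have fin: "finite A" and ne: "A \<noteq> {}" and z: "0 \<notin> A" and s: "\<Sum>A = n - c"
    and n1: "1 \<notin> A" using A by (auto simp: Tp_def T3_def DP_def)
  define m where "m = Max A"
  have mA: "m \<in> A" "\<And>x. x \<in> A \<Longrightarrow> x \<le> m" using ne fin unfolding m_def by auto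
  have m4: "m \<ge> 4" "m - 1 \<in> A" "m - 2 \<in> A" using A unfolding m_def by (auto simp: Tp_def T3_def)
  define M where "M = mset_set A + replicate_mset c 1"
  have PM: "Psi p = M" unfolding pe Psi_def M_def by simp
  have ge2: "\<And>x. x \<in> A \<Longrightarrow> 2 \<le> x" using z n1 by (metis One_nat_def less_2_cases not_le)
  have cnt1: "count M 1 = c" unfolding M_def using n1 fin by simp
  have cntx: "count M x \<le> 1" if "1 < x" for x unfolding M_def using that fin by (simp add: count_mset_set')
  have pos: "\<forall>x\<in>#M. 0 < x" unfolding M_def using fin z by (auto intro: gr0I)
  have e: "sum_mset M = sum_mset (mset_set A) + c" unfolding M_def by simp
  have sum: "sum_mset M = n"
    using e sum_mset_mset_set[OF fin] s c2 assms(1) by linarith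
  have filt: "filter_mset (\<lambda>x. 2 \<le> x) M = mset_set A"
  proof -
    have "filter_mset (\<lambda>x. 2 \<le> x) (mset_set A) = mset_set A"
    proof -
      have "{x\<in>A. 2 \<le> x} = A" using ge2 by blast
      then show ?thesis using fin by simp
    qed
    moreover have "filter_mset (\<lambda>x. 2 \<le> x) (replicate_mset c (1::nat)) = {#}" by (induction c) auto
    ultimately show ?thesis unfolding M_def by simp
  qed
  have "{m, m - 1, m - 2} \<subseteq> A" using mA m4 by auto
  then have "card {m, m - 1, m - 2} \<le> card A" using fin by (rule card_mono[rotated])
  moreover have "card {m, m - 1, m - 2} = 3"
  proof -
    have "m \<noteq> m - 1" "m \<noteq> m - 2" "m - 1 \<noteq> m - 2" using m4(1) by linarith+
    then show ?thesis by simp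
  qed
  ultimately have c3: "3 \<le> size (filter_mset (\<lambda>x. 2 \<le> x) M)" unfolding filt using fin by simp
  define R where "R = mset_set (A - {m, m - 1, m - 2}) + replicate_mset c 1"
  have Rlt: "\<forall>y\<in>#R. y \<le> m - 3"
  proof
    fix y assume "y \<in># R"
    then have "y = 1 \<or> (y \<in> A \<and> y \<noteq> m \<and> y \<noteq> m - 1 \<and> y \<noteq> m - 2)"
      unfolding R_def using fin by (auto split: if_splits)
    then show "y \<le> m - 3" using mA(2)[of y] m4(1) by auto
  qed
  have Mdec: "M = add_mset m (add_mset (m - 1) (add_mset (m - 2) R))"
  proof -
    define D where "D = A - {m, m - 1, m - 2}"
    have Aeq: "A = insert m (insert (m - 1) (insert (m - 2) D))" unfolding D_def using mA(1) m4(2,3) by blast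
    have fD: "finite D" unfolding D_def using fin by simp
    have dist: "m \<noteq> m - 1" "m \<noteq> m - 2" "m - 1 \<noteq> m - 2" using m4(1) by linarith+
    have nD: "m \<notin> D" "m - 1 \<notin> D" "m - 2 \<notin> D" unfolding D_def by auto
    from Aeq have "mset_set A = mset_set (insert m (insert (m - 1) (insert (m - 2) D)))" by (rule arg_cong)
    also have "\<dots> = add_mset m (add_mset (m - 1) (add_mset (m - 2) (mset_set D)))"
      using fD dist nD by simp
    finally have "mset_set A = add_mset m (add_mset (m - 1) (add_mset (m - 2) (mset_set (A - {m, m - 1, m - 2}))))"
      unfolding D_def .
    then show ?thesis unfolding M_def R_def by simp
  qed
  have pd: "parts_desc M = m # (m - 1) # (m - 2) # parts_desc R"
  proof -
    have a: "parts_desc (add_mset (m - 2) R) = (m - 2) # parts_desc R"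
      by (rule pd_add) (use Rlt in auto)
    have b: "parts_desc (add_mset (m - 1) (add_mset (m - 2) R)) = (m - 1) # (m - 2) # parts_desc R"
      by (subst pd_add) (use Rlt a in auto)
    show ?thesis unfolding Mdec
      by (subst pd_add) (use Rlt b in auto)
  qed
  have top: "parts_desc M ! 0 = parts_desc M ! 1 + 1" "parts_desc M ! 1 = parts_desc M ! 2 + 1"
    unfolding pd using m4(1) by (simp_all add: numeral_2_eq_2)
  have "M \<in> special_partitions n"
    unfolding special_partitions_def is_partition_def using pos sum cnt1 c2 cntx c3 top by auto
  moreover have "Phi M = p"
  proof -
    have "set_mset M - {1} = A" unfolding M_def using fin n1 by auto
    then show ?thesis unfolding Phi_def pe cnt1 by simp
  qed
  ultimately show ?thesis using PM by simp
qed

lemma card_special: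
  assumes "2 \<le> n"
  shows "card (special_partitions n) = card (Tp n) + card (Tp (n-1)) + card (Tp (n-2))"
proof -
  have bij: "bij_betw Phi (special_partitions n) (Sigma {0,1,2} (\<lambda>c. Tp (n - c)))"
    by (rule bij_betw_byWitness[where f'=Psi]) (use special_fw special_bw[OF assms] in blast)+
  have "card (special_partitions n) = card (Sigma {0,1,2} (\<lambda>c. Tp (n - c)))"
    using bij_betw_same_card[OF bij] .
  also have "\<dots> = (\<Sum>c\<in>{0,1,2}. card (Tp (n - c)))"
    by (rule card_SigmaI) (auto simp: finite_Tp)
  also have "\<dots> = card (Tp n) + card (Tp (n-1)) + card (Tp (n-2))" by simp
  finally show ?thesis .
qed



lemma T2_small: "k < 3 \<Longrightarrow> T2 k = {}"
proof (rule ccontr)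
  assume k: "k < 3" and "T2 k \<noteq> {}"
  then obtain A where A: "A \<in> T2 k" by blast
  have fin: "finite A" and ne: "A \<noteq> {}" and s: "\<Sum>A = k"
    using A by (auto simp: T2_def DP_def)
  define m where "m = Max A"
  have m: "m \<in> A" "m - 1 \<in> A" "m \<ge> 2" using A ne fin unfolding m_def by (auto simp: T2_def)
  have "\<Sum>{m, m - 1} \<le> \<Sum>A" using m fin by (intro sum_mono2) auto
  moreover have "m \<noteq> m - 1" using m(3) by linarith
  ultimately have "m + (m - 1) \<le> k" using s by simp
  then show False using k m(3) by linarith
qed

lemma Tp_small: "k < 9 \<Longrightarrow> Tp k = {}"
proof (rule ccontr)
  assume k: "k < 9" and "Tp k \<noteq> {}"
  then obtain A where A: "A \<in> Tp k" by blast
  have fin: "finite A" and ne: "A \<noteq> {}" and s: "\<Sum>A = k"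
    using A by (auto simp: Tp_def T3_def DP_def)
  define m where "m = Max A"
  have m: "m \<in> A" "m - 1 \<in> A" "m - 2 \<in> A" "m \<ge> 4" using A ne fin unfolding m_def
    by (auto simp: Tp_def T3_def)
  have "\<Sum>{m, m - 1, m - 2} \<le> \<Sum>A" using m fin by (intro sum_mono2) auto
  moreover have "m \<noteq> m - 1" "m \<noteq> m - 2" "m - 1 \<noteq> m - 2" using m(4) by linarith+
  ultimately have "m + (m - 1) + (m - 2) \<le> k" using s by simp
  then show False using k m(4) by linarith
qed

lemma W_formula:
  fixes t q p :: "nat \<Rightarrow> int"
  assumes hV: "\<And>k. 2 \<le> k \<Longrightarrow> t k = t (k-2) + q k + (if k = 3 then 1 else 0)"
    and hq: "\<And>k. 1 \<le> k \<Longrightarrow> q k = p k + p (k-1) + (if k = 6 then 1 else 0)"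
    and t01: "t 0 = 0" "t 1 = 0"
    and p0: "\<And>k. k < 9 \<Longrightarrow> p k = 0"
  shows "3 \<le> k \<Longrightarrow> t k - t (k-3) = p k + p (k-1) + p (k-2)
     + (if k = 3 then 1 else 0) + (if k = 5 then 1 else 0) + (if k = 7 then 1 else 0)"
proof (induction k rule: less_induct)
  case (less k)
  show ?case
  proof (cases "k = 3")
    case True
    have "t 3 = t 1 + q 3 + 1" using hV[of 3] by simp
    moreover have "q 3 = p 3 + p 2" using hq[of 3] by simp
    ultimately show ?thesis using True t01 p0[of 3] p0[of 2] p0[of 1] by simp
  next
    case False
    then have k4: "k \<ge> 4" using less.prems by simp
    have IH: "t (k-1) - t (k-1-3) = p (k-1) + p (k-1-1) + p (k-1-2)
     + (if k-1 = 3 then 1 else 0) + (if k-1 = 5 then 1 else 0) + (if k-1 = 7 then 1 else 0)"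
      using less.IH[of "k-1"] k4 by simp
    have e1: "k - 1 - 3 = k - 4" "k - 1 - 1 = k - 2" "k - 1 - 2 = k - 3" "k - 2 - 2 = k - 4"
      "k - 1 - 2 = k - 3" "k - 2 - 1 = k - 3" by auto
    have v0: "t k = t (k-2) + q k + (if k = 3 then 1 else 0)" using hV[of k] k4 by simp
    have v1: "t (k-1) = t (k-3) + q (k-1) + (if k - 1 = 3 then 1 else 0)" using hV[of "k-1"] k4 e1 by simp
    have v2: "t (k-2) = t (k-4) + q (k-2) + (if k - 2 = 3 then 1 else 0)" using hV[of "k-2"] k4 e1 by simp
    have q0: "q k = p k + p (k-1) + (if k = 6 then 1 else 0)" using hq[of k] k4 by simp
    have q1: "q (k-1) = p (k-1) + p (k-2) + (if k - 1 = 6 then 1 else 0)" using hq[of "k-1"] k4 e1 by simp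
    have q2: "q (k-2) = p (k-2) + p (k-3) + (if k - 2 = 6 then 1 else 0)" using hq[of "k-2"] k4 e1 by simp
    show ?thesis
    proof (cases "9 \<le> k")
      case k9: True
      have a0: "t k = t (k-2) + q k" using v0 k9 by auto
      have a1: "t (k-1) = t (k-3) + q (k-1)" using v1 k9 by auto
      have a2: "t (k-2) = t (k-4) + q (k-2)" using v2 k9 by auto
      have b0: "q k = p k + p (k-1)" using q0 k9 by auto
      have b1: "q (k-1) = p (k-1) + p (k-2)" using q1 k9 by auto
      have b2: "q (k-2) = p (k-2) + p (k-3)" using q2 k9 by auto
      have IH': "t (k-1) - t (k-4) = p (k-1) + p (k-2) + p (k-3)" using IH k9 unfolding e1 by auto
      have "t k - t (k-3) = p k + p (k-1) + p (k-2)" using a0 a1 a2 b0 b1 b2 IH' by linarith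
      then show ?thesis using k9 by auto
    next
      case F9: False
      then have "k = 4 \<or> k = 5 \<or> k = 6 \<or> k = 7 \<or> k = 8" using k4 by auto
      then show ?thesis using IH v0 v1 v2 q0 q1 q2 p0 t01
        by (elim disjE; simp; linarith)
    qed
  qed
qed

theorem proposition2p1:
  fixes n :: nat
  assumes "9 \<le> n"
  shows "card (odd_ge5_partitions n) = card (special_partitions n)"
proof -
  have HT: "card (H k) = card (T2 k)" if "1 \<le> k" for k
    using card_OddP_step[OF that] card_DP_step[OF that] euler[of k] euler[of "k-1"] by simp
  define t where "t k = int (card (T2 k))" for k
  define q where "q k = int (card (T3 k))" for k
  define p where "p k = int (card (Tp k))" for k
  have W: "t n - t (n-3) = p n + p (n-1) + p (n-2)
     + (if n = 3 then 1 else 0) + (if n = 5 then 1 else 0) + (if n = 7 then 1 else 0)"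
  proof (rule W_formula)
    show "t k = t (k-2) + q k + (if k = 3 then 1 else 0)" if "2 \<le> k" for k
      using card_T2_step[OF that] unfolding t_def q_def by simp
    show "q k = p k + p (k-1) + (if k = 6 then 1 else 0)" if "1 \<le> k" for k
      using card_T3_step[OF that] unfolding q_def p_def by simp
    show "t 0 = 0" "t 1 = 0" unfolding t_def using T2_small by auto
    show "p k = 0" if "k < 9" for k unfolding p_def using Tp_small[OF that] by simp
    show "3 \<le> n" using assms by simp
  qed
  have O: "card (odd_ge5_partitions n) + card (H (n-3)) = card (H n)"
    using card_H_step[of n] assms by simp
  have "int (card (odd_ge5_partitions n)) = t n - t (n-3)"
    using O HT[of n] HT[of "n-3"] assms unfolding t_def by simp
  also have "\<dots> = p n + p (n-1) + p (n-2)" using W assms by simp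
  also have "\<dots> = int (card (special_partitions n))"
    using card_special[of n] assms unfolding p_def by simp
  finally show ?thesis by simp
qed


end
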